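(* Let $U\subset\mathbb{R}^2$ be bounded, open and contractible, and let $H:\overline{U}\times\mathbb{R}\to\overline{U}\times\mathbb{R}$ be a homeomorphism with $H(U\times\mathbb{R})=U\times\mathbb{R}$. Then the restriction of $H$ to $U\times\mathbb{R}=U^*\times\mathbb{R}$ extends to a homeomorphism $H^*:X^*\times\mathbb{R}\to X^*\times\mathbb{R}$ (with respect to the metric $d$ below) such that $H^*(\partial X^*\times\mathbb{R})=\partial X^*\times\mathbb{R}$, and $H^*$ extends further to a homeomorphism of the two-point compactification $(X^*\times\mathbb{R})\cup\{\infty,-\infty\}$.
   Context: For $x,y\in U$ let $d^*(x,y)$ be the infimum of the Euclidean diameters of paths in $U$ from $x$ to $y$; this is a metric on $U$. Write $U^*=(U,d^* )$, let $(X^*,d^* )$ be its metric completion and $\partial X^*=X^*\setminus U^*$. $X^*\times\mathbb{R}$ carries the metric $d((x,s),(y,t))=\max(d^*(x,y),|s-t|)$. The space $(X^*\times\mathbb{R})\cup\{\infty,-\infty\}$ is obtained by adjoining one point for each end of $\mathbb{R}$: a sequence $(y_n,t_n)$ converges to $\infty$ iff $t_n\to+\infty$, and to $-\infty$ iff $t_n\to-\infty$. *)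

theory Defs
  imports "HOL-Analysis.Analysis"
begin

definition dstar :: "(real^2) set \<Rightarrow> real^2 \<Rightarrow> real^2 \<Rightarrow> real" where
  "dstar U x y = Inf {diameter (path_image g) | g. path g \<and> path_image g \<subseteq> U
                        \<and> pathstart g = x \<and> pathfinish g = y}"

definition is_completion ::
    "(real^2) set \<Rightarrow> 'a set \<Rightarrow> ('a \<Rightarrow> 'a \<Rightarrow> real) \<Rightarrow> (real^2 \<Rightarrow> 'a) \<Rightarrow> bool" where
  "is_completion U X dX emb \<longleftrightarrow>
     Metric_space X dX \<and> Metric_space.mcomplete X dX \<and> emb ` U \<subseteq> X \<and>
     (\<forall>x\<in>U. \<forall>y\<in>U. dX (emb x) (emb y) = dstar U x y) \<and>
     (Metric_space.mtopology X dX) closure_of (emb ` U) = X"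

definition dprod :: "('a \<Rightarrow> 'a \<Rightarrow> real) \<Rightarrow> ('a \<times> real) \<Rightarrow> ('a \<times> real) \<Rightarrow> real" where
  "dprod dX p q = max (dX (fst p) (fst q)) \<bar>snd p - snd q\<bar>"

definition prod_top :: "'a set \<Rightarrow> ('a \<Rightarrow> 'a \<Rightarrow> real) \<Rightarrow> ('a \<times> real) topology" where
  "prod_top X dX = Metric_space.mtopology (X \<times> UNIV) (dprod dX)"

text \<open>Two-point compactification (X* \<times> R) \<union> {\<infinity>, -\<infinity>}: points are Inl p for p in X* \<times> R,
  Inr True = +\<infinity>, Inr False = -\<infinity>.\<close>
definition two_point_top :: "'a set \<Rightarrow> ('a \<Rightarrow> 'a \<Rightarrow> real) \<Rightarrow> (('a \<times> real) + bool) topology" where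
  "two_point_top X dX = topology_generated_by
     ({Inl ` W | W. openin (prod_top X dX) W}
      \<union> {insert (Inr True) (Inl ` (X \<times> {c<..})) | c. True}
      \<union> {insert (Inr False) (Inl ` (X \<times> {..<c})) | c. True})"

end

theory Submission
  imports Defs
begin

lemma dprod_metric:
  assumes "Metric_space X dX"
  shows "Metric_space (X \<times> (UNIV::real set)) (dprod dX)"
proof -
  interpret M: Metric_space X dX by fact
  show ?thesis
  proof
    fix x y assume "x \<in> X \<times> (UNIV::real set)" "y \<in> X \<times> (UNIV::real set)"
    then show "(dprod dX x y = 0) = (x = y)"
      unfolding dprod_def using M.zero[of "fst x" "fst y"] M.nonneg[of "fst x" "fst y"]
      apply (auto simp: prod_eq_iff max_def split: if_splits)
      by (metis M.zero M.nonneg order_antisym)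
  next
    fix x y z assume "x \<in> X \<times> (UNIV::real set)" "y \<in> X \<times> (UNIV::real set)" "z \<in> X \<times> (UNIV::real set)"
    then show "dprod dX x z \<le> dprod dX x y + dprod dX y z"
      unfolding dprod_def using M.triangle[of "fst x" "fst y" "fst z"] M.nonneg[of "fst x" "fst y"] M.nonneg[of "fst y" "fst z"]
      by (auto simp: max_def split: if_splits)
  qed (auto simp: dprod_def M.commute abs_minus_commute)
qed

lemma dprod_complete:
  assumes MX: "Metric_space X dX" and C: "Metric_space.mcomplete X dX"
  shows "Metric_space.mcomplete (X \<times> (UNIV::real set)) (dprod dX)"
proof -
  interpret M: Metric_space X dX by fact
  interpret P: Metric_space "X \<times> (UNIV::real set)" "dprod dX" by (rule dprod_metric[OF MX])
  show ?thesis unfolding P.mcomplete_def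
  proof (intro allI impI)
    fix \<sigma> :: "nat \<Rightarrow> 'a \<times> real"
    assume cs: "P.MCauchy \<sigma>"
    have r: "\<And>n. fst (\<sigma> n) \<in> X" using cs unfolding P.MCauchy_def by (auto simp: image_subset_iff mem_Times_iff)
    have d1: "dX (fst p) (fst q) \<le> dprod dX p q" for p q by (simp add: dprod_def)
    have d2: "\<bar>snd p - snd q\<bar> \<le> dprod dX p q" for p q by (simp add: dprod_def)
    have "M.MCauchy (fst \<circ> \<sigma>)"
      unfolding M.MCauchy_def
    proof (intro conjI allI impI)
      show "range (fst \<circ> \<sigma>) \<subseteq> X" using r by auto
      fix e :: real assume "e > 0"
      then obtain N where "\<forall>n n'. N \<le> n \<longrightarrow> N \<le> n' \<longrightarrow> dprod dX (\<sigma> n) (\<sigma> n') < e"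
        using cs unfolding P.MCauchy_def by blast
      then show "\<exists>N. \<forall>n n'. N \<le> n \<longrightarrow> N \<le> n' \<longrightarrow> dX ((fst \<circ> \<sigma>) n) ((fst \<circ> \<sigma>) n') < e"
        using d1 by (smt (verit) comp_apply)
    qed
    then obtain a where a: "limitin M.mtopology (fst \<circ> \<sigma>) a sequentially"
      using C M.mcomplete_def by blast
    have "Cauchy (snd \<circ> \<sigma>)"
      unfolding Cauchy_def dist_real_def
    proof (intro allI impI)
      fix e :: real assume "e > 0"
      then obtain N where "\<forall>n n'. N \<le> n \<longrightarrow> N \<le> n' \<longrightarrow> dprod dX (\<sigma> n) (\<sigma> n') < e"
        using cs unfolding P.MCauchy_def by blast
      then show "\<exists>N. \<forall>m\<ge>N. \<forall>n\<ge>N. \<bar>(snd \<circ> \<sigma>) m - (snd \<circ> \<sigma>) n\<bar> < e"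
        using d2 by (smt (verit) comp_apply)
    qed
    then obtain b where b: "(snd \<circ> \<sigma>) \<longlonglongrightarrow> b"
      using Cauchy_convergent_iff convergent_def by blast
    have "limitin P.mtopology \<sigma> (a, b) sequentially"
      unfolding P.limit_metric_sequentially
    proof (intro conjI allI impI)
      show "(a, b) \<in> X \<times> UNIV" using a M.limit_metric_sequentially by auto
      fix e :: real assume e: "e > 0"
      have "\<exists>N. \<forall>n\<ge>N. fst (\<sigma> n) \<in> X \<and> dX (fst (\<sigma> n)) a < e"
        using a e unfolding M.limit_metric_sequentially by (simp add: o_def)
      then obtain N1 where N1: "\<forall>n\<ge>N1. dX (fst (\<sigma> n)) a < e" by blast
      obtain N2 where N2: "\<forall>n\<ge>N2. dist (snd (\<sigma> n)) b < e"
        using b e unfolding lim_sequentially by auto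
      show "\<exists>N. \<forall>n\<ge>N. \<sigma> n \<in> X \<times> UNIV \<and> dprod dX (\<sigma> n) (a, b) < e"
        apply (rule exI[of _ "max N1 N2"])
        using N1 N2 r by (auto simp: dprod_def dist_real_def mem_Times_iff)
    qed
    then show "\<exists>x. limitin P.mtopology \<sigma> x sequentially" by blast
  qed
qed

lemma dstar_set_ne:
  assumes "path_connected U" "x \<in> U" "y \<in> U"
  shows "{diameter (path_image g) | g. path g \<and> path_image g \<subseteq> U
                        \<and> pathstart g = x \<and> pathfinish g = y} \<noteq> {}"
  using assms unfolding path_connected_def by blast

lemma dstar_bdd:
  "bdd_below {diameter (path_image g) | g. path g \<and> path_image g \<subseteq> U
                        \<and> pathstart g = x \<and> pathfinish g = y}"
  by (rule bdd_belowI[of _ 0]) (auto intro!: diameter_ge_0 compact_imp_bounded)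

lemma dstar_le:
  assumes "path g" "path_image g \<subseteq> U" "pathstart g = x" "pathfinish g = y"
  shows "dstar U x y \<le> diameter (path_image g)"
  unfolding dstar_def by (rule cInf_lower[OF _ dstar_bdd]) (use assms in blast)

lemma dstar_lt:
  assumes "path_connected U" "x \<in> U" "y \<in> U" "dstar U x y < e"
  obtains g where "path g" "path_image g \<subseteq> U" "pathstart g = x" "pathfinish g = y"
     "diameter (path_image g) < e"
  using cInf_lessD[OF dstar_set_ne[OF assms(1-3)]] assms(4) unfolding dstar_def by blast

lemma dstar_ge:
  assumes "path_connected U" "x \<in> U" "y \<in> U"
  shows "dist x y \<le> dstar U x y"
  unfolding dstar_def
proof (rule cInf_greatest[OF dstar_set_ne[OF assms]])
  fix r assume "r \<in> {diameter (path_image g) | g. path g \<and> path_image g \<subseteq> U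
                        \<and> pathstart g = x \<and> pathfinish g = y}"
  then obtain g where g: "path g" "pathstart g = x" "pathfinish g = y" "r = diameter (path_image g)" by blast
  show "dist x y \<le> r" unfolding g(4)
    by (rule diameter_bounded_bound) (use g in \<open>auto intro: compact_imp_bounded pathstart_in_path_image pathfinish_in_path_image\<close>)
qed

lemma completion_inj:
  assumes "is_completion U X dX emb" "path_connected U"
  shows "inj_on emb U"
proof (rule inj_onI)
  fix x y assume xy: "x \<in> U" "y \<in> U" "emb x = emb y"
  interpret M: Metric_space X dX using assms(1) unfolding is_completion_def by blast
  have "emb x \<in> X" using xy assms(1) unfolding is_completion_def by blast
  then have "dX (emb x) (emb y) = 0" using xy by simp
  moreover have iso: "\<forall>x\<in>U. \<forall>y\<in>U. dX (emb x) (emb y) = dstar U x y" using assms(1) unfolding is_completion_def by blast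
  then have "dX (emb x) (emb y) = dstar U x y" using xy(1,2) by blast
  ultimately have "dstar U x y = 0" by simp
  then show "x = y" using dstar_ge[OF assms(2) xy(1,2)] by simp
qed

lemma completion_dense:
  assumes "is_completion U X dX emb"
  shows "prod_top X dX closure_of (emb ` U \<times> UNIV) = X \<times> UNIV"
proof -
  have MX: "Metric_space X dX" and cl: "Metric_space.mtopology X dX closure_of (emb ` U) = X"
    and sub: "emb ` U \<subseteq> X"
    using assms unfolding is_completion_def by blast+
  interpret M: Metric_space X dX by fact
  interpret P: Metric_space "X \<times> (UNIV::real set)" "dprod dX" by (rule dprod_metric[OF MX])
  show ?thesis unfolding prod_top_def P.metric_closure_of
  proof (intro set_eqI iffI)
    fix q :: "'a \<times> real" assume "q \<in> X \<times> UNIV"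
    then obtain p t where q: "q = (p, t)" "p \<in> X" by auto
    have "\<forall>r>0. \<exists>y\<in>emb ` U. y \<in> M.mball p r" using q(2) cl unfolding M.metric_closure_of by blast
    have "\<forall>r>0. \<exists>y\<in>emb ` U \<times> UNIV. y \<in> P.mball q r"
    proof (intro allI impI)
      fix r :: real assume "r > 0"
      then obtain y where y: "y \<in> emb ` U" "y \<in> M.mball p r"
        using \<open>\<forall>r>0. \<exists>y\<in>emb ` U. y \<in> M.mball p r\<close> by blast
      have "(y, t) \<in> P.mball q r" using y q by (auto simp: dprod_def M.in_mball P.in_mball)
      then show "\<exists>y\<in>emb ` U \<times> UNIV. y \<in> P.mball q r" using y by blast
    qed
    then show "q \<in> {x \<in> X \<times> UNIV. \<forall>r>0. \<exists>y\<in>emb ` U \<times> UNIV. y \<in> P.mball x r}"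
      using q by auto
  qed auto
qed

lemma core_cauchy:
  fixes f :: "(real^2) \<times> real \<Rightarrow> (real^2) \<times> real"
  assumes K: "compact K" and UK: "U \<subseteq> K" and pc: "path_connected U"
    and cf: "continuous_on (K \<times> UNIV) f" and fU: "f ` (U \<times> UNIV) \<subseteq> U \<times> UNIV"
    and cpl: "is_completion U X dX emb"
  shows "Cauchy_continuous_map (submetric (metric (X \<times> (UNIV::real set), dprod dX)) (emb ` U \<times> UNIV))
           (metric (X \<times> (UNIV::real set), dprod dX))
           (\<lambda>q. (emb (fst (f (inv_into U emb (fst q), snd q))), snd (f (inv_into U emb (fst q), snd q))))"
proof -
  have MX: "Metric_space X dX" and sub: "emb ` U \<subseteq> X"
    and iso: "\<forall>x\<in>U. \<forall>y\<in>U. dX (emb x) (emb y) = dstar U x y"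
    using cpl unfolding is_completion_def by blast+
  interpret M: Metric_space X dX by fact
  interpret P: Metric_space "X \<times> (UNIV::real set)" "dprod dX" by (rule dprod_metric[OF MX])
  define F where "F = (\<lambda>q. (emb (fst (f (inv_into U emb (fst q), snd q))), snd (f (inv_into U emb (fst q), snd q))))"
  have fU': "fst (f (x, t)) \<in> U" if "x \<in> U" for x t using fU that by (auto simp: image_subset_iff mem_Times_iff)
  show ?thesis
    unfolding Cauchy_continuous_map_def F_def[symmetric]
  proof (intro allI impI)
    fix \<sigma> :: "nat \<Rightarrow> 'a \<times> real"
    assume cs: "Metric_space.MCauchy (mspace (submetric (metric (X \<times> UNIV, dprod dX)) (emb ` U \<times> UNIV)))
       (mdist (submetric (metric (X \<times> UNIV, dprod dX)) (emb ` U \<times> UNIV))) \<sigma>"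
    then have cs': "\<forall>n. \<sigma> n \<in> emb ` U \<times> UNIV"
      and cd: "\<And>e. e > 0 \<Longrightarrow> \<exists>N. \<forall>n n'. N \<le> n \<longrightarrow> N \<le> n' \<longrightarrow> dprod dX (\<sigma> n) (\<sigma> n') < e"
      unfolding Metric_space.MCauchy_def[OF Metric_space_mspace_mdist] by auto
    define x where "x n = inv_into U emb (fst (\<sigma> n))" for n
    define t where "t n = snd (\<sigma> n)" for n
    have fs: "fst (\<sigma> n) \<in> emb ` U" for n using cs' by (auto simp: mem_Times_iff)
    have xU: "x n \<in> U" for n using fs unfolding x_def by (rule inv_into_into)
    have ex: "emb (x n) = fst (\<sigma> n)" for n using fs unfolding x_def by (rule f_inv_into_f)
    have Fs: "F (\<sigma> n) = (emb (fst (f (x n, t n))), snd (f (x n, t n)))" for n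
      unfolding F_def x_def t_def by simp
    have dd: "dprod dX (\<sigma> n) (\<sigma> n') = max (dstar U (x n) (x n')) \<bar>t n - t n'\<bar>" for n n'
      unfolding dprod_def using iso xU ex t_def by (metis)
    have "Cauchy t"
      unfolding Cauchy_def dist_real_def
    proof (intro allI impI)
      fix e :: real assume "e > 0"
      then obtain N where "\<forall>n n'. N \<le> n \<longrightarrow> N \<le> n' \<longrightarrow> dprod dX (\<sigma> n) (\<sigma> n') < e"
        using cd by blast
      then show "\<exists>N. \<forall>m\<ge>N. \<forall>n\<ge>N. \<bar>t m - t n\<bar> < e" using dd by (smt (verit))
    qed
    then obtain T where T: "T > 0" "\<And>n. \<bar>t n\<bar> \<le> T"
      using Cauchy_Bseq BseqE by (metis real_norm_def)
    define C where "C = K \<times> {-T..T}"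
    have "compact C" unfolding C_def using K by (simp add: compact_Times)
    moreover have "continuous_on C f" using cf unfolding C_def by (rule continuous_on_subset) auto
    ultimately have uc: "uniformly_continuous_on C f" by (simp add: compact_uniformly_continuous)
    show "Metric_space.MCauchy (mspace (metric (X \<times> UNIV, dprod dX))) (mdist (metric (X \<times> UNIV, dprod dX))) (F \<circ> \<sigma>)"
      unfolding P.mspace_metric P.mdist_metric P.MCauchy_def
    proof (intro conjI allI impI)
      show "range (F \<circ> \<sigma>) \<subseteq> X \<times> UNIV" using Fs fU' xU sub by auto
      fix e :: real assume e: "e > 0"
      obtain \<delta> where \<delta>: "\<delta> > 0" "\<And>a b. a \<in> C \<Longrightarrow> b \<in> C \<Longrightarrow> dist b a < \<delta> \<Longrightarrow> dist (f b) (f a) < e/2"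
        using uc e unfolding uniformly_continuous_on_def by (metis half_gt_zero)
      obtain N where N: "\<forall>n n'. N \<le> n \<longrightarrow> N \<le> n' \<longrightarrow> dprod dX (\<sigma> n) (\<sigma> n') < \<delta>/2"
        using cd \<delta>(1) by (metis half_gt_zero)
      show "\<exists>N. \<forall>n n'. N \<le> n \<longrightarrow> N \<le> n' \<longrightarrow> dprod dX ((F \<circ> \<sigma>) n) ((F \<circ> \<sigma>) n') < e"
      proof (intro exI allI impI)
        fix n n' assume nn: "N \<le> n" "N \<le> n'"
        have ds: "dstar U (x n) (x n') < \<delta>/2" and dt: "\<bar>t n - t n'\<bar> < \<delta>/2"
          using N nn dd by (smt (verit))+
        obtain g where g: "path g" "path_image g \<subseteq> U" "pathstart g = x n" "pathfinish g = x n'"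
          "diameter (path_image g) < \<delta>/2"
          using dstar_lt[OF pc xU xU ds] by blast
        define a where "a \<tau> = (g \<tau>, t n + \<tau> * (t n' - t n))" for \<tau>
        have aC: "a \<tau> \<in> C" if "\<tau> \<in> {0..1}" for \<tau>
        proof -
          have "g \<tau> \<in> K" using g(2) UK that unfolding path_image_def by blast
          moreover have "\<bar>t n + \<tau> * (t n' - t n)\<bar> \<le> T"
          proof -
            have "t n + \<tau> * (t n' - t n) = (1 - \<tau>) * t n + \<tau> * t n'" by algebra
            moreover have "\<bar>(1 - \<tau>) * t n\<bar> \<le> (1 - \<tau>) * T" using T(2)[of n] that
              by (simp add: abs_mult mult_left_mono)
            moreover have "\<bar>\<tau> * t n'\<bar> \<le> \<tau> * T" using T(2)[of n'] that
              by (simp add: abs_mult mult_left_mono)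
            ultimately have "\<bar>t n + \<tau> * (t n' - t n)\<bar> \<le> (1 - \<tau>) * T + \<tau> * T"
              by (metis abs_triangle_ineq add_mono order_trans)
            then show ?thesis by (simp add: algebra_simps)
          qed
          ultimately show ?thesis unfolding C_def a_def by auto
        qed
        have bnd: "bounded (path_image g)" using g(1) by (simp add: compact_imp_bounded compact_path_image)
        have adist: "dist (a \<tau>1) (a \<tau>2) < \<delta>" if "\<tau>1 \<in> {0..1}" "\<tau>2 \<in> {0..1}" for \<tau>1 \<tau>2
        proof -
          have "dist (g \<tau>1) (g \<tau>2) \<le> diameter (path_image g)"
            using that bnd by (intro diameter_bounded_bound) (auto simp: path_image_def)
          moreover have "dist (t n + \<tau>1 * (t n' - t n)) (t n + \<tau>2 * (t n' - t n)) \<le> \<bar>t n - t n'\<bar>"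
          proof -
            have "dist (t n + \<tau>1 * (t n' - t n)) (t n + \<tau>2 * (t n' - t n)) = \<bar>\<tau>1 - \<tau>2\<bar> * \<bar>t n - t n'\<bar>"
              by (simp add: dist_real_def abs_mult[symmetric] algebra_simps)
            also have "\<dots> \<le> 1 * \<bar>t n - t n'\<bar>" using that by (intro mult_right_mono) auto
            finally show ?thesis by simp
          qed
          moreover have "dist (a \<tau>1) (a \<tau>2) \<le> dist (g \<tau>1) (g \<tau>2) + dist (t n + \<tau>1 * (t n' - t n)) (t n + \<tau>2 * (t n' - t n))"
            unfolding a_def dist_Pair_Pair by (rule sqrt_sum_squares_le_sum) auto
          ultimately show ?thesis using g(5) dt by linarith
        qed
        define \<gamma> where "\<gamma> = (\<lambda>\<tau>. fst (f (a \<tau>)))"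
        have "continuous_on {0..1} a"
          unfolding a_def using g(1) unfolding path_def by (intro continuous_intros) auto
        moreover have "a ` {0..1} \<subseteq> K \<times> UNIV"
        proof (rule image_subsetI)
          fix \<tau> :: real assume "\<tau> \<in> {0..1}"
          then have "a \<tau> \<in> K \<times> {-T..T}" using aC unfolding C_def by blast
          then show "a \<tau> \<in> K \<times> UNIV" by (auto simp: mem_Times_iff)
        qed
        ultimately have "continuous_on {0..1} (f \<circ> a)"
          using continuous_on_compose continuous_on_subset[OF cf] by blast
        then have p\<gamma>: "path \<gamma>" unfolding path_def \<gamma>_def o_def by (intro continuous_intros)
        have i\<gamma>: "path_image \<gamma> \<subseteq> U"
          unfolding path_image_def \<gamma>_def a_def using g(2) fU' unfolding path_image_def by auto
        have s\<gamma>: "pathstart \<gamma> = fst (f (x n, t n))"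
          unfolding pathstart_def \<gamma>_def a_def using g(3) by (simp add: pathstart_def)
        have f\<gamma>: "pathfinish \<gamma> = fst (f (x n', t n'))"
          unfolding pathfinish_def \<gamma>_def a_def using g(4) by (simp add: pathfinish_def)
        have "diameter (path_image \<gamma>) \<le> e/2"
        proof (rule diameter_le)
          show "path_image \<gamma> \<noteq> {} \<or> 0 \<le> e / 2" using e by simp
          fix u v assume "u \<in> path_image \<gamma>" "v \<in> path_image \<gamma>"
          then obtain \<tau>1 \<tau>2 where \<tau>: "\<tau>1 \<in> {0..1}" "\<tau>2 \<in> {0..1}" "u = \<gamma> \<tau>1" "v = \<gamma> \<tau>2"
            unfolding path_image_def by auto
          have "dist (f (a \<tau>1)) (f (a \<tau>2)) < e/2"
            using \<delta>(2)[OF aC[OF \<tau>(2)] aC[OF \<tau>(1)] adist[OF \<tau>(1,2)]] .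
          moreover have "norm (u - v) \<le> dist (f (a \<tau>1)) (f (a \<tau>2))"
            using dist_fst_le[of "f (a \<tau>1)" "f (a \<tau>2)"] unfolding \<tau> \<gamma>_def dist_norm .
          ultimately show "norm (u - v) \<le> e/2" by simp
        qed
        then have d1: "dstar U (fst (f (x n, t n))) (fst (f (x n', t n'))) \<le> e/2"
          using dstar_le[OF p\<gamma> i\<gamma> s\<gamma> f\<gamma>] by simp
        have "dist (f (a 1)) (f (a 0)) < e/2"
          using \<delta>(2)[OF aC aC adist] by simp
        then have "dist (f (x n', t n')) (f (x n, t n)) < e/2"
          unfolding a_def using g(3,4) by (simp add: pathstart_def pathfinish_def)
        then have d2: "\<bar>snd (f (x n, t n)) - snd (f (x n', t n'))\<bar> < e/2"
          using dist_snd_le[of "f (x n', t n')" "f (x n, t n)"] by (simp add: dist_real_def abs_minus_commute)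
        have "dprod dX ((F \<circ> \<sigma>) n) ((F \<circ> \<sigma>) n') = max (dstar U (fst (f (x n, t n))) (fst (f (x n', t n'))))
             \<bar>snd (f (x n, t n)) - snd (f (x n', t n'))\<bar>"
          unfolding o_def Fs dprod_def using iso fU' xU by simp
        then show "dprod dX ((F \<circ> \<sigma>) n) ((F \<circ> \<sigma>) n') < e" using d1 d2 e by simp
      qed
    qed
  qed
qed

lemma extension:
  fixes f :: "(real^2) \<times> real \<Rightarrow> (real^2) \<times> real"
  assumes K: "compact K" and UK: "U \<subseteq> K" and pc: "path_connected U"
    and cf: "continuous_on (K \<times> UNIV) f" and fU: "f ` (U \<times> UNIV) \<subseteq> U \<times> UNIV"
    and cpl: "is_completion U X dX emb"
  obtains Hs where "continuous_map (prod_top X dX) (prod_top X dX) Hs"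
    "\<And>x t. x \<in> U \<Longrightarrow> Hs (emb x, t) = (emb (fst (f (x, t))), snd (f (x, t)))"
proof -
  have MX: "Metric_space X dX" and cX: "Metric_space.mcomplete X dX"
    using cpl unfolding is_completion_def by blast+
  interpret P: Metric_space "X \<times> (UNIV::real set)" "dprod dX" by (rule dprod_metric[OF MX])
  have mc: "mcomplete_of (metric (X \<times> (UNIV::real set), dprod dX))"
    using dprod_complete[OF MX cX] by simp
  obtain g where g: "continuous_map (subtopology (mtopology_of (metric (X \<times> (UNIV::real set), dprod dX)))
        ((mtopology_of (metric (X \<times> (UNIV::real set), dprod dX))) closure_of (emb ` U \<times> UNIV)))
        (mtopology_of (metric (X \<times> (UNIV::real set), dprod dX))) g"
    and gF: "\<And>q. q \<in> emb ` U \<times> UNIV \<Longrightarrow> g q = (emb (fst (f (inv_into U emb (fst q), snd q))), snd (f (inv_into U emb (fst q), snd q)))"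
    using Cauchy_continuous_map_extends_to_continuous_closure_of[OF mc core_cauchy[OF assms]] by blast
  have "continuous_map (prod_top X dX) (prod_top X dX) g"
    using g completion_dense[OF cpl] unfolding prod_top_def P.mtopology_of
    by (metis P.topspace_mtopology subtopology_topspace)
  moreover have "g (emb x, t) = (emb (fst (f (x, t))), snd (f (x, t)))" if "x \<in> U" for x t
    using gF[of "(emb x, t)"] that inv_into_f_f[OF completion_inj[OF cpl pc] that] by auto
  ultimately show ?thesis using that by blast
qed

lemma approx_snd:
  fixes f :: "(real^2) \<times> real \<Rightarrow> (real^2) \<times> real"
  assumes cpl: "is_completion U X dX emb"
    and Hc: "continuous_map (prod_top X dX) (prod_top X dX) Hs"
    and Hf: "\<And>x t. x \<in> U \<Longrightarrow> Hs (emb x, t) = (emb (fst (f (x, t))), snd (f (x, t)))"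
    and p: "p \<in> X"
  shows "\<exists>x\<in>U. \<bar>snd (Hs (p, t)) - snd (f (x, t))\<bar> < 1"
proof -
  have MX: "Metric_space X dX" and cl: "Metric_space.mtopology X dX closure_of (emb ` U) = X"
    using cpl unfolding is_completion_def by blast+
  interpret M: Metric_space X dX by fact
  interpret P: Metric_space "X \<times> (UNIV::real set)" "dprod dX" by (rule dprod_metric[OF MX])
  have "\<forall>a\<in>X \<times> UNIV. \<forall>\<epsilon>>0. \<exists>\<delta>>0. \<forall>x. x \<in> X \<times> UNIV \<and> dprod dX a x < \<delta> \<longrightarrow> dprod dX (Hs a) (Hs x) < \<epsilon>"
    using Hc unfolding prod_top_def P.metric_continuous_map[OF dprod_metric[OF MX]] by blast
  then obtain \<delta> where \<delta>: "\<delta> > 0" "\<And>q. q \<in> X \<times> UNIV \<Longrightarrow> dprod dX (p, t) q < \<delta> \<Longrightarrow> dprod dX (Hs (p, t)) (Hs q) < 1"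
    using p by (metis mem_Times_iff UNIV_I fst_conv snd_conv zero_less_one)
  have "\<forall>r>0. \<exists>y\<in>emb ` U. y \<in> M.mball p r" using p cl unfolding M.metric_closure_of by blast
  then obtain x where x: "x \<in> U" "dX p (emb x) < \<delta>" using \<delta>(1) by (auto simp: M.in_mball)
  have ex: "emb x \<in> X" using cpl x(1) unfolding is_completion_def by blast
  have "dprod dX (p, t) (emb x, t) < \<delta>" using x(2) M.nonneg[of p "emb x"] by (simp add: dprod_def)
  then have "dprod dX (Hs (p, t)) (Hs (emb x, t)) < 1" using \<delta>(2) ex by blast
  then have "\<bar>snd (Hs (p, t)) - snd (f (x, t))\<bar> < 1" using Hf[OF x(1)] unfolding dprod_def by simp
  then show ?thesis using x(1) by blast
qed

lemma sign_const:
  fixes \<phi> :: "'a::topological_space \<Rightarrow> real"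
  assumes "connected A" "continuous_on A \<phi>" "\<And>z. z \<in> A \<Longrightarrow> \<phi> z \<noteq> 0"
  shows "(\<forall>z\<in>A. \<phi> z > 0) \<or> (\<forall>z\<in>A. \<phi> z < 0)"
proof (rule ccontr)
  assume "\<not> ?thesis"
  then obtain z1 z2 where z: "z1 \<in> A" "z2 \<in> A" "\<phi> z1 < 0" "\<phi> z2 > 0"
    using assms(3) by (meson linorder_neqE_linordered_idom not_less)
  have "connected (\<phi> ` A)" using assms(1,2) connected_continuous_image by blast
  then have "{\<phi> z1..\<phi> z2} \<subseteq> \<phi> ` A" using z by (intro connected_contains_Icc) auto
  then have "0 \<in> \<phi> ` A" using z by auto
  then show False using assms(3) by auto
qed

lemma snd_bound:
  fixes f g :: "(real^2) \<times> real \<Rightarrow> (real^2) \<times> real"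
  assumes K: "compact K" and cg: "continuous_on (K \<times> UNIV) g"
    and fK: "f ` (K \<times> UNIV) \<subseteq> K \<times> UNIV"
    and gf: "\<And>z. z \<in> K \<times> UNIV \<Longrightarrow> g (f z) = z"
  shows "\<exists>B. \<forall>x\<in>K. \<forall>t. \<bar>t\<bar> > B \<longrightarrow> \<bar>snd (f (x, t))\<bar> > M"
proof -
  have "compact (g ` (K \<times> {-M..M}))"
    using K by (intro compact_continuous_image continuous_on_subset[OF cg] compact_Times) auto
  then obtain B where B: "\<And>z. z \<in> K \<times> {-M..M} \<Longrightarrow> norm (g z) \<le> B"
    using compact_imp_bounded bounded_iff by (metis image_eqI)
  have "\<forall>x\<in>K. \<forall>t. \<bar>t\<bar> > B \<longrightarrow> \<bar>snd (f (x, t))\<bar> > M"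
  proof (intro ballI allI impI)
    fix x t assume x: "x \<in> K" and t: "\<bar>t\<bar> > B"
    show "\<bar>snd (f (x, t))\<bar> > M"
    proof (rule ccontr)
      assume "\<not> ?thesis"
      moreover have "fst (f (x, t)) \<in> K" using fK x by (auto simp: image_subset_iff mem_Times_iff)
      ultimately have "f (x, t) \<in> K \<times> {-M..M}" by (auto simp: mem_Times_iff)
      then have "norm (g (f (x, t))) \<le> B" by (rule B)
      then have "norm (x, t) \<le> B" using gf x by simp
      moreover have "\<bar>t\<bar> \<le> norm (x, t)" by (metis norm_snd_le real_norm_def snd_conv)
      ultimately show False using t by simp
    qed
  qed
  then show ?thesis by blast
qed

lemma ends:
  fixes f g :: "(real^2) \<times> real \<Rightarrow> (real^2) \<times> real"
  assumes K: "compact K" "connected K" "K \<noteq> {}"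
    and cf: "continuous_on (K \<times> UNIV) f" and cg: "continuous_on (K \<times> UNIV) g"
    and fK: "f ` (K \<times> UNIV) \<subseteq> K \<times> UNIV" and gK: "g ` (K \<times> UNIV) \<subseteq> K \<times> UNIV"
    and gf: "\<And>z. z \<in> K \<times> UNIV \<Longrightarrow> g (f z) = z"
    and fg: "\<And>z. z \<in> K \<times> UNIV \<Longrightarrow> f (g z) = z"
  obtains b where
    "\<forall>c. \<exists>c'. \<forall>x\<in>K. \<forall>t>c'. (if b then snd (f (x, t)) > c else snd (f (x, t)) < c)"
    "\<forall>c. \<exists>c'. \<forall>x\<in>K. \<forall>t<c'. (if b then snd (f (x, t)) < c else snd (f (x, t)) > c)"
proof -
  define \<phi> where "\<phi> z = snd (f z)" for z
  have c\<phi>: "continuous_on (K \<times> UNIV) \<phi>" unfolding \<phi>_def using cf by (intro continuous_intros)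
  have bnd: "\<exists>B. \<forall>x\<in>K. \<forall>t. \<bar>t\<bar> > B \<longrightarrow> \<bar>\<phi> (x, t)\<bar> > M" for M
    unfolding \<phi>_def using snd_bound[OF K(1) cg fK gf] by blast
  obtain B0 where B0: "\<And>x t. x \<in> K \<Longrightarrow> \<bar>t\<bar> > B0 \<Longrightarrow> \<bar>\<phi> (x, t)\<bar> > 0" using bnd[of 0] by blast
  define top where "top = K \<times> {B0<..}"
  define bot where "bot = K \<times> {..<-B0}"
  have st: "(\<forall>z\<in>top. \<phi> z > 0) \<or> (\<forall>z\<in>top. \<phi> z < 0)"
  proof (rule sign_const)
    show "connected top" unfolding top_def using K(2) by (intro connected_Times) auto
    show "continuous_on top \<phi>" using c\<phi> by (rule continuous_on_subset) (auto simp: top_def)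
    fix z assume "z \<in> top" then show "\<phi> z \<noteq> 0" using B0 unfolding top_def by force
  qed
  have sb: "(\<forall>z\<in>bot. \<phi> z > 0) \<or> (\<forall>z\<in>bot. \<phi> z < 0)"
  proof (rule sign_const)
    show "connected bot" unfolding bot_def using K(2) by (intro connected_Times) auto
    show "continuous_on bot \<phi>" using c\<phi> by (rule continuous_on_subset) (auto simp: bot_def)
    fix z assume "z \<in> bot" then show "\<phi> z \<noteq> 0" using B0 unfolding bot_def by force
  qed
  have "compact (\<phi> ` (K \<times> {-B0..B0}))"
    using K(1) by (intro compact_continuous_image continuous_on_subset[OF c\<phi>] compact_Times) auto
  then obtain L where L: "\<And>z. z \<in> K \<times> {-B0..B0} \<Longrightarrow> \<bar>\<phi> z\<bar> \<le> L"
    using compact_imp_bounded bounded_iff by (metis image_eqI real_norm_def)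
  obtain x0 where x0: "x0 \<in> K" using K(3) by blast
  have cover: "z \<in> top \<or> z \<in> bot \<or> z \<in> K \<times> {-B0..B0}" if "z \<in> K \<times> UNIV" for z
    using that unfolding top_def bot_def by (cases z) auto
  have val: "\<exists>z\<in>K \<times> UNIV. \<phi> z = s" for s
  proof -
    have "g (x0, s) \<in> K \<times> UNIV" using gK x0 by auto
    moreover have "\<phi> (g (x0, s)) = s" unfolding \<phi>_def using fg x0 by simp
    ultimately show ?thesis by metis
  qed
  have not_pp: "\<not> ((\<forall>z\<in>top. \<phi> z > 0) \<and> (\<forall>z\<in>bot. \<phi> z > 0))"
  proof
    assume H: "(\<forall>z\<in>top. \<phi> z > 0) \<and> (\<forall>z\<in>bot. \<phi> z > 0)"
    obtain z where z: "z \<in> K \<times> UNIV" "\<phi> z = - \<bar>L\<bar> - 1" using val by blast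
    have "\<phi> z \<le> 0" using H z(2) by simp
    moreover have "z \<notin> K \<times> {-B0..B0}" using L z(2) by (smt (verit))
    ultimately show False using cover[OF z(1)] H by auto
  qed
  have not_nn: "\<not> ((\<forall>z\<in>top. \<phi> z < 0) \<and> (\<forall>z\<in>bot. \<phi> z < 0))"
  proof
    assume H: "(\<forall>z\<in>top. \<phi> z < 0) \<and> (\<forall>z\<in>bot. \<phi> z < 0)"
    obtain z where z: "z \<in> K \<times> UNIV" "\<phi> z = \<bar>L\<bar> + 1" using val by blast
    have "\<phi> z \<ge> 0" using H z(2) by simp
    moreover have "z \<notin> K \<times> {-B0..B0}" using L z(2) by (smt (verit))
    ultimately show False using cover[OF z(1)] H by auto
  qed
  define b where "b = (\<forall>z\<in>top. \<phi> z > 0)"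
  have tb: "\<forall>z\<in>top. if b then \<phi> z > 0 else \<phi> z < 0" using st unfolding b_def by auto
  have bb: "\<forall>z\<in>bot. if b then \<phi> z < 0 else \<phi> z > 0" using st sb not_pp not_nn unfolding b_def by auto
  show ?thesis
  proof (rule that[of b])
    show "\<forall>c. \<exists>c'. \<forall>x\<in>K. \<forall>t>c'. (if b then snd (f (x, t)) > c else snd (f (x, t)) < c)"
    proof
      fix c :: real
      obtain B1 where B1: "\<And>x t. x \<in> K \<Longrightarrow> \<bar>t\<bar> > B1 \<Longrightarrow> \<bar>\<phi> (x, t)\<bar> > \<bar>c\<bar>" using bnd[of "\<bar>c\<bar>"] by blast
      have "\<forall>x\<in>K. \<forall>t>max B0 (max B1 0). (if b then snd (f (x, t)) > c else snd (f (x, t)) < c)"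
      proof (intro ballI allI impI)
        fix x t assume x: "x \<in> K" and t: "t > max B0 (max B1 0)"
        have "(x, t) \<in> top" using x t unfolding top_def by auto
        then have "if b then \<phi> (x, t) > 0 else \<phi> (x, t) < 0" using tb by blast
        moreover have "\<bar>\<phi> (x, t)\<bar> > \<bar>c\<bar>" using B1 x t by simp
        ultimately show "if b then snd (f (x, t)) > c else snd (f (x, t)) < c"
          unfolding \<phi>_def by (auto split: if_splits)
      qed
      then show "\<exists>c'. \<forall>x\<in>K. \<forall>t>c'. (if b then snd (f (x, t)) > c else snd (f (x, t)) < c)" by blast
    qed
    show "\<forall>c. \<exists>c'. \<forall>x\<in>K. \<forall>t<c'. (if b then snd (f (x, t)) < c else snd (f (x, t)) > c)"
    proof
      fix c :: real
      obtain B1 where B1: "\<And>x t. x \<in> K \<Longrightarrow> \<bar>t\<bar> > B1 \<Longrightarrow> \<bar>\<phi> (x, t)\<bar> > \<bar>c\<bar>" using bnd[of "\<bar>c\<bar>"] by blast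
      have "\<forall>x\<in>K. \<forall>t< - max B0 (max B1 0). (if b then snd (f (x, t)) < c else snd (f (x, t)) > c)"
      proof (intro ballI allI impI)
        fix x t assume x: "x \<in> K" and t: "t < - max B0 (max B1 0)"
        have "(x, t) \<in> bot" using x t unfolding bot_def by auto
        then have "if b then \<phi> (x, t) < 0 else \<phi> (x, t) > 0" using bb by blast
        moreover have "\<bar>\<phi> (x, t)\<bar> > \<bar>c\<bar>" using B1 x t by simp
        ultimately show "if b then snd (f (x, t)) < c else snd (f (x, t)) > c"
          unfolding \<phi>_def by (auto split: if_splits)
      qed
      then show "\<exists>c'. \<forall>x\<in>K. \<forall>t<c'. (if b then snd (f (x, t)) < c else snd (f (x, t)) > c)" by blast
    qed
  qed
qed

lemma prod_top_topspace:
  assumes "Metric_space X dX"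
  shows "topspace (prod_top X dX) = X \<times> UNIV"
proof -
  interpret P: Metric_space "X \<times> (UNIV::real set)" "dprod dX" by (rule dprod_metric[OF assms])
  show ?thesis unfolding prod_top_def by simp
qed

lemma open_upper:
  assumes "Metric_space X dX"
  shows "openin (prod_top X dX) (X \<times> {c<..})"
proof -
  interpret P: Metric_space "X \<times> (UNIV::real set)" "dprod dX" by (rule dprod_metric[OF assms])
  show ?thesis unfolding prod_top_def P.openin_mtopology
  proof (intro conjI allI impI)
    fix q :: "'a \<times> real" assume q: "q \<in> X \<times> {c<..}"
    show "\<exists>r>0. P.mball q r \<subseteq> X \<times> {c<..}"
    proof (intro exI conjI)
      show "snd q - c > 0" using q by auto
      show "P.mball q (snd q - c) \<subseteq> X \<times> {c<..}"
        by (auto simp: P.in_mball dprod_def mem_Times_iff)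
    qed
  qed auto
qed

lemma open_lower:
  assumes "Metric_space X dX"
  shows "openin (prod_top X dX) (X \<times> {..<c})"
proof -
  interpret P: Metric_space "X \<times> (UNIV::real set)" "dprod dX" by (rule dprod_metric[OF assms])
  show ?thesis unfolding prod_top_def P.openin_mtopology
  proof (intro conjI allI impI)
    fix q :: "'a \<times> real" assume q: "q \<in> X \<times> {..<c}"
    show "\<exists>r>0. P.mball q r \<subseteq> X \<times> {..<c}"
    proof (intro exI conjI)
      show "c - snd q > 0" using q by auto
      show "P.mball q (c - snd q) \<subseteq> X \<times> {..<c}"
        by (auto simp: P.in_mball dprod_def mem_Times_iff)
    qed
  qed auto
qed

lemma two_point_topspace:
  assumes "Metric_space X dX"
  shows "topspace (two_point_top X dX) = Inl ` (X \<times> UNIV) \<union> {Inr True, Inr False}"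
proof -
  have "openin (prod_top X dX) (X \<times> UNIV)"
    using openin_topspace[of "prod_top X dX"] unfolding prod_top_topspace[OF assms] .
  define S where "S = ({Inl ` W |W. openin (prod_top X dX) W}
      \<union> {insert (Inr True) (Inl ` (X \<times> {c<..})) | c. True}
      \<union> {insert (Inr False) (Inl ` (X \<times> {..<c})) | c. True})"
  have sub1: "\<Union>S \<subseteq> Inl ` (X \<times> UNIV) \<union> {Inr True, Inr False}"
  proof (rule Union_least)
    fix V assume "V \<in> S"
    then have "(\<exists>W. V = Inl ` W \<and> openin (prod_top X dX) W) \<or> (\<exists>c. V = insert (Inr True) (Inl ` (X \<times> {c<..})))
      \<or> (\<exists>c. V = insert (Inr False) (Inl ` (X \<times> {..<c})))" unfolding S_def by (simp only: Un_iff mem_Collect_eq simp_thms disj_assoc)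
    then consider W where "V = Inl ` W" "openin (prod_top X dX) W" | c where "V = insert (Inr True) (Inl ` (X \<times> {c<..}))"
      | c where "V = insert (Inr False) (Inl ` (X \<times> {..<c}))" by (elim disjE exE conjE) auto
    then show "V \<subseteq> Inl ` (X \<times> UNIV) \<union> {Inr True, Inr False}"
    proof cases
      case 1
      have "W \<subseteq> X \<times> UNIV" using openin_subset[OF 1(2)] unfolding prod_top_topspace[OF assms] .
      then show ?thesis using 1 by blast
    next
      case 2 then show ?thesis by blast
    next
      case 3 then show ?thesis by blast
    qed
  qed
  have A: "Inl ` (X \<times> UNIV) \<in> S" unfolding S_def using \<open>openin (prod_top X dX) (X \<times> UNIV)\<close> by blast
  have B: "insert (Inr True) (Inl ` (X \<times> {0<..})) \<in> S" unfolding S_def by blast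
  have C: "insert (Inr False) (Inl ` (X \<times> {..<0})) \<in> S" unfolding S_def by blast
  have sub2: "Inl ` (X \<times> UNIV) \<union> {Inr True, Inr False} \<subseteq> \<Union>S"
  proof
    fix z :: "'a \<times> real + bool" assume "z \<in> Inl ` (X \<times> UNIV) \<union> {Inr True, Inr False}"
    then consider "z \<in> Inl ` (X \<times> UNIV)" | "z = Inr True" | "z = Inr False" by blast
    then show "z \<in> \<Union>S"
    proof cases
      case 1 then show ?thesis using A by (rule UnionI[rotated])
    next
      case 2 then show ?thesis using B by (intro UnionI[of _ _ z]) auto
    next
      case 3 then show ?thesis using C by (intro UnionI[of _ _ z]) auto
    qed
  qed
  have "\<Union>S = Inl ` (X \<times> UNIV) \<union> {Inr True, Inr False}"
    using sub1 sub2 by (rule equalityI)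
  then show ?thesis unfolding two_point_top_def topology_generated_by_topspace S_def .
qed

lemma tp_open1:
  "openin (prod_top X dX) W \<Longrightarrow> openin (two_point_top X dX) (Inl ` W)"
  unfolding two_point_top_def by (rule topology_generated_by_Basis) blast

lemma tp_open2:
  "openin (two_point_top X dX) (insert (Inr True) (Inl ` (X \<times> {c<..})))"
  unfolding two_point_top_def by (rule topology_generated_by_Basis) blast

lemma tp_open3:
  "openin (two_point_top X dX) (insert (Inr False) (Inl ` (X \<times> {..<c})))"
  unfolding two_point_top_def by (rule topology_generated_by_Basis) blast

lemma pre_eq_gen:
  assumes Q: "\<And>q. q \<in> A \<Longrightarrow> (Hs q \<in> B) = Q q" and D: "\<And>q. q \<in> D \<Longrightarrow> Q q" and DA: "D \<subseteq> A"
    and e: "(e' = b) = e"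
  shows "(\<lambda>z. case z of Inl p \<Rightarrow> Inl (Hs p) | Inr s \<Rightarrow> Inr (s = b)) -` insert (Inr e) (Inl ` B) \<inter> (Inl ` A \<union> {Inr True, Inr False})
       = insert (Inr e') (Inl ` D) \<union> Inl ` {q \<in> A. Q q}"
proof (rule set_eqI)
  fix z :: "'a + bool"
  show "z \<in> (\<lambda>z. case z of Inl p \<Rightarrow> Inl (Hs p) | Inr s \<Rightarrow> Inr (s = b)) -` insert (Inr e) (Inl ` B) \<inter> (Inl ` A \<union> {Inr True, Inr False})
       \<longleftrightarrow> z \<in> insert (Inr e') (Inl ` D) \<union> Inl ` {q \<in> A. Q q}"
  proof (cases z)
    case (Inl q)
    have "Inl (Hs q) \<in> insert (Inr e) (Inl ` B) \<longleftrightarrow> Hs q \<in> B" by auto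
    moreover have "Inl q \<in> Inl ` A \<union> {Inr True, Inr False} \<longleftrightarrow> q \<in> A" by auto
    moreover have "Inl q \<in> insert (Inr e') (Inl ` D) \<union> Inl ` {q \<in> A. Q q} \<longleftrightarrow> q \<in> D \<or> (q \<in> A \<and> Q q)" by auto
    ultimately show ?thesis using Inl Q D DA by auto
  next
    case (Inr s)
    then show ?thesis using e by (cases s; cases b; cases e; cases e') auto
  qed
qed

lemma pre_eq_inl:
  shows "(\<lambda>z. case z of Inl p \<Rightarrow> Inl (Hs p) | Inr s \<Rightarrow> Inr (s = b)) -` (Inl ` W) \<inter> (Inl ` A \<union> {Inr True, Inr False})
       = Inl ` {q \<in> A. Hs q \<in> W}"
proof (rule set_eqI)
  fix z :: "'a + bool"
  show "z \<in> (\<lambda>z. case z of Inl p \<Rightarrow> Inl (Hs p) | Inr s \<Rightarrow> Inr (s = b)) -` (Inl ` W) \<inter> (Inl ` A \<union> {Inr True, Inr False})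
       \<longleftrightarrow> z \<in> Inl ` {q \<in> A. Hs q \<in> W}"
    by (cases z) auto
qed

lemma two_point_cont:
  assumes MX: "Metric_space X dX"
    and Hc: "continuous_map (prod_top X dX) (prod_top X dX) Hs"
    and ctop: "\<forall>c. \<exists>c'. \<forall>p\<in>X. \<forall>t>c'. (if b then snd (Hs (p, t)) > c else snd (Hs (p, t)) < c)"
    and cbot: "\<forall>c. \<exists>c'. \<forall>p\<in>X. \<forall>t<c'. (if b then snd (Hs (p, t)) < c else snd (Hs (p, t)) > c)"
  shows "continuous_map (two_point_top X dX) (two_point_top X dX)
           (\<lambda>z. case z of Inl p \<Rightarrow> Inl (Hs p) | Inr s \<Rightarrow> Inr (s = b))"
proof -
  define G where "G = (\<lambda>z. case z of Inl p \<Rightarrow> Inl (Hs p) | Inr s \<Rightarrow> Inr (s = b))"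
  have HP: "Hs q \<in> X \<times> UNIV" if "q \<in> X \<times> UNIV" for q
    using continuous_map_image_subset_topspace[OF Hc] that unfolding prod_top_topspace[OF MX] by blast
  have TS: "topspace (two_point_top X dX) = Inl ` (X \<times> UNIV) \<union> {Inr True, Inr False}"
    by (rule two_point_topspace[OF MX])
  have pre: "openin (prod_top X dX) {q \<in> X \<times> UNIV. Hs q \<in> W}" if "openin (prod_top X dX) W" for W
    using openin_continuous_map_preimage[OF Hc that] unfolding prod_top_topspace[OF MX] .
  have preU: "openin (prod_top X dX) {q \<in> X \<times> UNIV. snd (Hs q) > c}" for c
  proof -
    have "{q \<in> X \<times> UNIV. snd (Hs q) > c} = {q \<in> X \<times> UNIV. Hs q \<in> X \<times> {c<..}}"
      using HP by (auto simp: mem_Times_iff)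
    then show ?thesis using pre[OF open_upper[OF MX]] by simp
  qed
  have preL: "openin (prod_top X dX) {q \<in> X \<times> UNIV. snd (Hs q) < c}" for c
  proof -
    have "{q \<in> X \<times> UNIV. snd (Hs q) < c} = {q \<in> X \<times> UNIV. Hs q \<in> X \<times> {..<c}}"
      using HP by (auto simp: mem_Times_iff)
    then show ?thesis using pre[OF open_lower[OF MX]] by simp
  qed
  have "continuous_map (two_point_top X dX) (topology_generated_by
     ({Inl ` W | W. openin (prod_top X dX) W}
      \<union> {insert (Inr True) (Inl ` (X \<times> {c<..})) | c. True}
      \<union> {insert (Inr False) (Inl ` (X \<times> {..<c})) | c. True})) G"
  proof (rule continuous_on_generated_topo)
    show "G ` topspace (two_point_top X dX) \<subseteq> \<Union> ({Inl ` W | W. openin (prod_top X dX) W}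
      \<union> {insert (Inr True) (Inl ` (X \<times> {c<..})) | c. True}
      \<union> {insert (Inr False) (Inl ` (X \<times> {..<c})) | c. True})"
    proof -
      have U: "\<Union> ({Inl ` W | W. openin (prod_top X dX) W}
      \<union> {insert (Inr True) (Inl ` (X \<times> {c<..})) | c. True}
      \<union> {insert (Inr False) (Inl ` (X \<times> {..<c})) | c. True}) = Inl ` (X \<times> UNIV) \<union> {Inr True, Inr False}"
        using TS unfolding two_point_top_def topology_generated_by_topspace .
      have "G z \<in> Inl ` (X \<times> UNIV) \<union> {Inr True, Inr False}" if "z \<in> Inl ` (X \<times> UNIV) \<union> {Inr True, Inr False}" for z
        using that HP unfolding G_def by (cases z) auto
      then show ?thesis unfolding U TS by blast
    qed
    fix V assume "V \<in> {Inl ` W | W. openin (prod_top X dX) W}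
      \<union> {insert (Inr True) (Inl ` (X \<times> {c<..})) | c. True}
      \<union> {insert (Inr False) (Inl ` (X \<times> {..<c})) | c. True}"
    then have "(\<exists>W. V = Inl ` W \<and> openin (prod_top X dX) W) \<or> (\<exists>c. V = insert (Inr True) (Inl ` (X \<times> {c<..})))
      \<or> (\<exists>c. V = insert (Inr False) (Inl ` (X \<times> {..<c})))"
      by (simp only: Un_iff mem_Collect_eq simp_thms disj_assoc)
    then consider W where "V = Inl ` W" "openin (prod_top X dX) W" | c where "V = insert (Inr True) (Inl ` (X \<times> {c<..}))"
      | c where "V = insert (Inr False) (Inl ` (X \<times> {..<c}))" by (elim disjE exE conjE) auto
    then show "openin (two_point_top X dX) (G -` V \<inter> topspace (two_point_top X dX))"
    proof cases
      case 1
      have "G -` V \<inter> topspace (two_point_top X dX) = Inl ` {q \<in> X \<times> UNIV. Hs q \<in> W}"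
        unfolding TS 1 G_def by (rule pre_eq_inl)
      then show ?thesis using tp_open1[OF pre[OF 1(2)]] by simp
    next
      case 2
      show ?thesis
      proof (cases b)
        case True
        obtain c' where "\<forall>p\<in>X. \<forall>t>c'. (if b then snd (Hs (p, t)) > c else snd (Hs (p, t)) < c)" using spec[OF ctop, of c] by blast
        then have c': "\<forall>p\<in>X. \<forall>t>c'. snd (Hs (p, t)) > c" using True by simp
        have eq: "G -` V \<inter> topspace (two_point_top X dX) =
            insert (Inr True) (Inl ` (X \<times> {c'<..})) \<union> Inl ` {q \<in> X \<times> UNIV. snd (Hs q) > c}"
          unfolding TS 2 G_def by (rule pre_eq_gen) (use True c' HP in \<open>auto simp: mem_Times_iff\<close>)
        show ?thesis unfolding eq by (intro openin_Un tp_open2 tp_open1 preU)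
      next
        case False
        obtain c' where "\<forall>p\<in>X. \<forall>t<c'. (if b then snd (Hs (p, t)) < c else snd (Hs (p, t)) > c)" using spec[OF cbot, of c] by blast
        then have c': "\<forall>p\<in>X. \<forall>t<c'. snd (Hs (p, t)) > c" using False by simp
        have eq: "G -` V \<inter> topspace (two_point_top X dX) =
            insert (Inr False) (Inl ` (X \<times> {..<c'})) \<union> Inl ` {q \<in> X \<times> UNIV. snd (Hs q) > c}"
          unfolding TS 2 G_def by (rule pre_eq_gen) (use False c' HP in \<open>auto simp: mem_Times_iff\<close>)
        show ?thesis unfolding eq by (intro openin_Un tp_open3 tp_open1 preU)
      qed
    next
      case 3
      show ?thesis
      proof (cases b)
        case True
        obtain c' where "\<forall>p\<in>X. \<forall>t<c'. (if b then snd (Hs (p, t)) < c else snd (Hs (p, t)) > c)" using spec[OF cbot, of c] by blast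
        then have c': "\<forall>p\<in>X. \<forall>t<c'. snd (Hs (p, t)) < c" using True by simp
        have eq: "G -` V \<inter> topspace (two_point_top X dX) =
            insert (Inr False) (Inl ` (X \<times> {..<c'})) \<union> Inl ` {q \<in> X \<times> UNIV. snd (Hs q) < c}"
          unfolding TS 3 G_def by (rule pre_eq_gen) (use True c' HP in \<open>auto simp: mem_Times_iff\<close>)
        show ?thesis unfolding eq by (intro openin_Un tp_open3 tp_open1 preL)
      next
        case False
        obtain c' where "\<forall>p\<in>X. \<forall>t>c'. (if b then snd (Hs (p, t)) > c else snd (Hs (p, t)) < c)" using spec[OF ctop, of c] by blast
        then have c': "\<forall>p\<in>X. \<forall>t>c'. snd (Hs (p, t)) < c" using False by simp
        have eq: "G -` V \<inter> topspace (two_point_top X dX) =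
            insert (Inr True) (Inl ` (X \<times> {c'<..})) \<union> Inl ` {q \<in> X \<times> UNIV. snd (Hs q) < c}"
          unfolding TS 3 G_def by (rule pre_eq_gen) (use False c' HP in \<open>auto simp: mem_Times_iff\<close>)
        show ?thesis unfolding eq by (intro openin_Un tp_open2 tp_open1 preL)
      qed
    qed
  qed
  then show ?thesis unfolding G_def two_point_top_def .
qed

lemma lift_top:
  fixes \<phi>s :: "'p \<Rightarrow> real \<Rightarrow> real" and \<phi> :: "'x \<Rightarrow> real \<Rightarrow> real"
  assumes ap: "\<And>p t. p \<in> X \<Longrightarrow> \<exists>x\<in>U. \<bar>\<phi>s p t - \<phi> x t\<bar> < 1" and UK: "U \<subseteq> K"
    and ct: "\<forall>c. \<exists>c'. \<forall>x\<in>K. \<forall>t>c'. (if b then \<phi> x t > c else \<phi> x t < c)"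
  shows "\<forall>c. \<exists>c'. \<forall>p\<in>X. \<forall>t>c'. (if b then \<phi>s p t > c else \<phi>s p t < c)"
proof
  fix c :: real
  obtain c' where c': "\<forall>x\<in>K. \<forall>t>c'. (if b then \<phi> x t > (if b then c + 1 else c - 1) else \<phi> x t < (if b then c + 1 else c - 1))"
    using spec[OF ct, of "if b then c + 1 else c - 1"] by blast
  have "\<forall>p\<in>X. \<forall>t>c'. (if b then \<phi>s p t > c else \<phi>s p t < c)"
  proof (intro ballI allI impI)
    fix p t assume p: "p \<in> X" and t: "t > c'"
    obtain x where x: "x \<in> U" "\<bar>\<phi>s p t - \<phi> x t\<bar> < 1" using ap[OF p] by blast
    have "x \<in> K" using x UK by blast
    then have "if b then \<phi> x t > c + 1 else \<phi> x t < c - 1" using c' t by (cases b) auto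
    then show "if b then \<phi>s p t > c else \<phi>s p t < c" using x(2) by (cases b) (auto split: if_splits)
  qed
  then show "\<exists>c'. \<forall>p\<in>X. \<forall>t>c'. (if b then \<phi>s p t > c else \<phi>s p t < c)" by blast
qed

lemma lift_bot:
  fixes \<phi>s :: "'p \<Rightarrow> real \<Rightarrow> real" and \<phi> :: "'x \<Rightarrow> real \<Rightarrow> real"
  assumes ap: "\<And>p t. p \<in> X \<Longrightarrow> \<exists>x\<in>U. \<bar>\<phi>s p t - \<phi> x t\<bar> < 1" and UK: "U \<subseteq> K"
    and ct: "\<forall>c. \<exists>c'. \<forall>x\<in>K. \<forall>t<c'. (if b then \<phi> x t < c else \<phi> x t > c)"
  shows "\<forall>c. \<exists>c'. \<forall>p\<in>X. \<forall>t<c'. (if b then \<phi>s p t < c else \<phi>s p t > c)"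
proof
  fix c :: real
  obtain c' where c': "\<forall>x\<in>K. \<forall>t<c'. (if b then \<phi> x t < (if b then c - 1 else c + 1) else \<phi> x t > (if b then c - 1 else c + 1))"
    using spec[OF ct, of "if b then c - 1 else c + 1"] by blast
  have "\<forall>p\<in>X. \<forall>t<c'. (if b then \<phi>s p t < c else \<phi>s p t > c)"
  proof (intro ballI allI impI)
    fix p t assume p: "p \<in> X" and t: "t < c'"
    obtain x where x: "x \<in> U" "\<bar>\<phi>s p t - \<phi> x t\<bar> < 1" using ap[OF p] by blast
    have "x \<in> K" using x UK by blast
    then have "if b then \<phi> x t < c - 1 else \<phi> x t > c + 1" using c' t by (cases b) auto
    then show "if b then \<phi>s p t < c else \<phi>s p t > c" using x(2) by (cases b) (auto split: if_splits)
  qed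
  then show "\<exists>c'. \<forall>p\<in>X. \<forall>t<c'. (if b then \<phi>s p t < c else \<phi>s p t > c)" by blast
qed

lemma sign_consistent:
  fixes f g :: "'a \<times> real \<Rightarrow> 'a \<times> real"
  assumes x0: "x0 \<in> K"
    and fK: "f ` (K \<times> UNIV) \<subseteq> K \<times> UNIV"
    and gf: "\<And>z. z \<in> K \<times> UNIV \<Longrightarrow> g (f z) = z"
    and ftop: "\<forall>c. \<exists>c'. \<forall>x\<in>K. \<forall>t>c'. (if b then snd (f (x, t)) > c else snd (f (x, t)) < c)"
    and fbot: "\<forall>c. \<exists>c'. \<forall>x\<in>K. \<forall>t<c'. (if b then snd (f (x, t)) < c else snd (f (x, t)) > c)"
    and gtop: "\<forall>c. \<exists>c'. \<forall>x\<in>K. \<forall>t>c'. (if b' then snd (g (x, t)) > c else snd (g (x, t)) < c)"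
  shows "b = b'"
proof (rule ccontr)
  assume ne: "b \<noteq> b'"
  obtain c1 where c1: "\<forall>x\<in>K. \<forall>t>c1. (if b' then snd (g (x, t)) > 0 else snd (g (x, t)) < 0)"
    using spec[OF gtop, of 0] by blast
  show False
  proof (cases b)
    case True
    obtain c2 where c2: "\<forall>x\<in>K. \<forall>t>c2. snd (f (x, t)) > c1"
      using spec[OF ftop, of c1] True by auto
    define t where "t = max c2 0 + 1"
    have "f (x0, t) \<in> K \<times> UNIV" using fK x0 by auto
    then have y: "fst (f (x0, t)) \<in> K" by (auto simp: mem_Times_iff)
    have s: "snd (f (x0, t)) > c1" using c2 x0 unfolding t_def by auto
    have "snd (g (f (x0, t))) = t" using gf x0 by simp
    moreover have "if b' then snd (g (fst (f (x0, t)), snd (f (x0, t)))) > 0 else snd (g (fst (f (x0, t)), snd (f (x0, t)))) < 0"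
      using c1 y s by blast
    then have "if b' then snd (g (f (x0, t))) > 0 else snd (g (f (x0, t))) < 0" by (simp only: prod.collapse)
    then have "snd (g (f (x0, t))) < 0" using ne True by (cases b') auto
    ultimately show False unfolding t_def by simp
  next
    case False
    obtain c2 where c2: "\<forall>x\<in>K. \<forall>t<c2. snd (f (x, t)) > c1"
      using spec[OF fbot, of c1] False by auto
    define t where "t = min c2 0 - 1"
    have "f (x0, t) \<in> K \<times> UNIV" using fK x0 by auto
    then have y: "fst (f (x0, t)) \<in> K" by (auto simp: mem_Times_iff)
    have s: "snd (f (x0, t)) > c1" using c2 x0 unfolding t_def by auto
    have "snd (g (f (x0, t))) = t" using gf x0 by simp
    moreover have "if b' then snd (g (fst (f (x0, t)), snd (f (x0, t)))) > 0 else snd (g (fst (f (x0, t)), snd (f (x0, t)))) < 0"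
      using c1 y s by blast
    then have "if b' then snd (g (f (x0, t))) > 0 else snd (g (f (x0, t))) < 0" by (simp only: prod.collapse)
    then have "snd (g (f (x0, t))) > 0" using ne False by (cases b') auto
    ultimately show False unfolding t_def by simp
  qed
qed

lemma inverse_on_X:
  fixes f g :: "(real^2) \<times> real \<Rightarrow> (real^2) \<times> real"
  assumes cpl: "is_completion U X dX emb"
    and Hc: "continuous_map (prod_top X dX) (prod_top X dX) Hs"
    and Gc: "continuous_map (prod_top X dX) (prod_top X dX) Gs"
    and Hf: "\<And>x t. x \<in> U \<Longrightarrow> Hs (emb x, t) = (emb (fst (f (x, t))), snd (f (x, t)))"
    and Gg: "\<And>x t. x \<in> U \<Longrightarrow> Gs (emb x, t) = (emb (fst (g (x, t))), snd (g (x, t)))"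
    and gU: "\<And>z. z \<in> U \<times> UNIV \<Longrightarrow> fst (g z) \<in> U"
    and fg: "\<And>z. z \<in> U \<times> UNIV \<Longrightarrow> f (g z) = z"
    and p: "p \<in> X \<times> UNIV"
  shows "Hs (Gs p) = p"
proof -
  have MX: "Metric_space X dX" using cpl unfolding is_completion_def by blast
  interpret P: Metric_space "X \<times> (UNIV::real set)" "dprod dX" by (rule dprod_metric[OF MX])
  have c1: "p \<in> prod_top X dX closure_of (emb ` U \<times> UNIV)" using completion_dense[OF cpl] p by simp
  have c2: "Hausdorff_space (prod_top X dX)" unfolding prod_top_def by (rule P.Hausdorff_space_mtopology)
  have c3: "continuous_map (prod_top X dX) (prod_top X dX) (Hs \<circ> Gs)" using Gc Hc by (rule continuous_map_compose)
  have c4: "continuous_map (prod_top X dX) (prod_top X dX) id" by simp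
  have c5: "(Hs \<circ> Gs) q = id q" if qS: "q \<in> emb ` U \<times> UNIV" for q
  proof -
    obtain a t where qa: "q = (a, t)" "a \<in> emb ` U" using qS by (cases q) auto
    then obtain x where "a = emb x" "x \<in> U" by blast
    then have q: "q = (emb x, t)" "x \<in> U" using qa by auto
    have a: "fst (g (x, t)) \<in> U" using gU q(2) by auto
    have "(Hs \<circ> Gs) q = Hs (emb (fst (g (x, t))), snd (g (x, t)))" using Gg q by simp
    also have "\<dots> = (emb (fst (f (g (x, t)))), snd (f (g (x, t))))" using Hf[OF a] by simp
    also have "\<dots> = q" using fg q(2) q(1) by simp
    finally show "(Hs \<circ> Gs) q = id q" by simp
  qed
  have "(Hs \<circ> Gs) p = id p" by (rule forall_in_closure_of_eq[OF c1 c2 c3 c4 c5])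
  then show ?thesis by simp
qed

lemma boundary_incl:
  fixes g :: "(real^2) \<times> real \<Rightarrow> (real^2) \<times> real"
  assumes HP: "\<And>q. q \<in> X \<times> UNIV \<Longrightarrow> Hs q \<in> X \<times> UNIV"
    and GH: "\<And>q. q \<in> X \<times> UNIV \<Longrightarrow> Gs (Hs q) = q"
    and Gg: "\<And>x t. x \<in> U \<Longrightarrow> Gs (emb x, t) = (emb (fst (g (x, t))), snd (g (x, t)))"
    and gU: "\<And>z. z \<in> U \<times> UNIV \<Longrightarrow> fst (g z) \<in> U"
  shows "Hs ` ((X - emb ` U) \<times> UNIV) \<subseteq> (X - emb ` U) \<times> UNIV"
proof
  fix r assume "r \<in> Hs ` ((X - emb ` U) \<times> UNIV)"
  then obtain q where q: "q \<in> (X - emb ` U) \<times> UNIV" "r = Hs q" by blast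
  have qX: "q \<in> X \<times> UNIV" using q(1) by auto
  have rX: "r \<in> X \<times> UNIV" using HP[OF qX] q(2) by simp
  show "r \<in> (X - emb ` U) \<times> UNIV"
  proof (rule ccontr)
    assume "r \<notin> (X - emb ` U) \<times> UNIV"
    then obtain y s where r: "r = (emb y, s)" "y \<in> U" using rX by (cases r) auto
    have "q = Gs r" using GH[OF qX] q(2) by simp
    also have "\<dots> = (emb (fst (g (y, s))), snd (g (y, s)))" using Gg r by simp
    finally have "fst q \<in> emb ` U" using gU r(2) by auto
    then show False using q(1) by (auto simp: mem_Times_iff)
  qed
qed

theorem mainTheorem5:
  fixes U :: "(real^2) set"
    and H :: "(real^2) \<times> real \<Rightarrow> (real^2) \<times> real"
    and X :: "'a set" and dX :: "'a \<Rightarrow> 'a \<Rightarrow> real" and emb :: "real^2 \<Rightarrow> 'a"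
  assumes "bounded U" and "open U" and "contractible U"
    and "\<exists>H'. homeomorphism (closure U \<times> UNIV) (closure U \<times> UNIV) H H'"
    and "H ` (U \<times> UNIV) = U \<times> UNIV"
    and "is_completion U X dX emb"
  shows "\<exists>Hs. homeomorphic_map (prod_top X dX) (prod_top X dX) Hs
           \<and> (\<forall>x\<in>U. \<forall>t. Hs (emb x, t) = (emb (fst (H (x, t))), snd (H (x, t))))
           \<and> Hs ` ((X - emb ` U) \<times> UNIV) = (X - emb ` U) \<times> UNIV
           \<and> (\<exists>G. homeomorphic_map (two_point_top X dX) (two_point_top X dX) G
                 \<and> (\<forall>p\<in>X \<times> UNIV. G (Inl p) = Inl (Hs p)))"
proof -
  have MX: "Metric_space X dX" and cl: "Metric_space.mtopology X dX closure_of (emb ` U) = X"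
    using assms(6) unfolding is_completion_def by blast+
  obtain H' where hom: "homeomorphism (closure U \<times> UNIV) (closure U \<times> UNIV) H H'" using assms(4) by blast
  show ?thesis
  proof (cases "U = {}")
    case True
    then have XE: "X = {}" using cl by simp
    have "\<exists>G. homeomorphic_map (two_point_top X dX) (two_point_top X dX) G \<and> (\<forall>p\<in>X \<times> UNIV. G (Inl p) = Inl (id p))"
      using XE by (intro exI[of _ id]) auto
    moreover have "homeomorphic_map (prod_top X dX) (prod_top X dX) id" by simp
    ultimately show ?thesis using True XE by (intro exI[of _ id]) auto
  next
    case False
    define K where "K = closure U"
    have UK: "U \<subseteq> K" unfolding K_def by (rule closure_subset)
    have Kc: "compact K" unfolding K_def using assms(1) by simp
    have pc: "path_connected U" using assms(3) by (rule contractible_imp_path_connected)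
    have Kconn: "connected K" unfolding K_def using pc
      by (intro connected_imp_connected_closure path_connected_imp_connected)
    obtain x0 where x0: "x0 \<in> K" using False UK by blast
    have Kne: "K \<noteq> {}" using x0 by blast
    have H'H: "\<And>z. z \<in> K \<times> UNIV \<Longrightarrow> H' (H z) = z" and HK: "H ` (K \<times> UNIV) = K \<times> UNIV"
      and cH: "continuous_on (K \<times> UNIV) H" and HH': "\<And>z. z \<in> K \<times> UNIV \<Longrightarrow> H (H' z) = z"
      and H'K: "H' ` (K \<times> UNIV) = K \<times> UNIV" and cH': "continuous_on (K \<times> UNIV) H'"
      using hom unfolding homeomorphism_def K_def by auto
    have UKt: "U \<times> (UNIV::real set) \<subseteq> K \<times> UNIV" using UK by auto
    have HU: "H ` (U \<times> UNIV) \<subseteq> U \<times> UNIV" using assms(5) by simp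
    have H'U: "H' ` (U \<times> UNIV) \<subseteq> U \<times> UNIV"
    proof
      fix y assume "y \<in> H' ` (U \<times> UNIV)"
      then obtain z where z: "z \<in> U \<times> UNIV" "y = H' z" by blast
      have "z \<in> H ` (U \<times> UNIV)" using z(1) assms(5) by simp
      then obtain w where w: "w \<in> U \<times> UNIV" "z = H w" by blast
      have "w \<in> K \<times> UNIV" using w(1) UKt by blast
      then have "H' (H w) = w" by (rule H'H)
      then have "y = w" using z(2) w(2) by simp
      then show "y \<in> U \<times> UNIV" using w by simp
    qed
    have fU: "\<And>z. z \<in> U \<times> UNIV \<Longrightarrow> fst (H z) \<in> U" using HU by (auto simp: image_subset_iff mem_Times_iff)
    have gU: "\<And>z. z \<in> U \<times> UNIV \<Longrightarrow> fst (H' z) \<in> U" using H'U by (auto simp: image_subset_iff mem_Times_iff)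
    have fgU: "\<And>z. z \<in> U \<times> UNIV \<Longrightarrow> H (H' z) = z" using HH' UKt by blast
    have gfU: "\<And>z. z \<in> U \<times> UNIV \<Longrightarrow> H' (H z) = z" using H'H UKt by blast
    obtain Hs where Hc: "continuous_map (prod_top X dX) (prod_top X dX) Hs"
      and Hf: "\<And>x t. x \<in> U \<Longrightarrow> Hs (emb x, t) = (emb (fst (H (x, t))), snd (H (x, t)))"
      using extension[OF Kc UK pc cH HU assms(6)] by blast
    obtain Gs where Gc: "continuous_map (prod_top X dX) (prod_top X dX) Gs"
      and Gg: "\<And>x t. x \<in> U \<Longrightarrow> Gs (emb x, t) = (emb (fst (H' (x, t))), snd (H' (x, t)))"
      using extension[OF Kc UK pc cH' H'U assms(6)] by blast
    have inv1: "\<And>p. p \<in> X \<times> UNIV \<Longrightarrow> Hs (Gs p) = p"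
      using inverse_on_X[OF assms(6) Hc Gc Hf Gg gU fgU] by blast
    have inv2: "\<And>p. p \<in> X \<times> UNIV \<Longrightarrow> Gs (Hs p) = p"
      using inverse_on_X[OF assms(6) Gc Hc Gg Hf fU gfU] by blast
    have TS: "topspace (prod_top X dX) = X \<times> UNIV" by (rule prod_top_topspace[OF MX])
    have HP: "\<And>q. q \<in> X \<times> UNIV \<Longrightarrow> Hs q \<in> X \<times> UNIV"
      using continuous_map_image_subset_topspace[OF Hc] unfolding TS by blast
    have GP: "\<And>q. q \<in> X \<times> UNIV \<Longrightarrow> Gs q \<in> X \<times> UNIV"
      using continuous_map_image_subset_topspace[OF Gc] unfolding TS by blast
    have homeo: "homeomorphic_map (prod_top X dX) (prod_top X dX) Hs"
      unfolding homeomorphic_map_maps homeomorphic_maps_def using Hc Gc inv1 inv2 unfolding TS by blast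
    have b1: "Hs ` ((X - emb ` U) \<times> UNIV) \<subseteq> (X - emb ` U) \<times> UNIV"
      by (rule boundary_incl[OF HP inv2 Gg gU])
    have b2: "Gs ` ((X - emb ` U) \<times> UNIV) \<subseteq> (X - emb ` U) \<times> UNIV"
      by (rule boundary_incl[OF GP inv1 Hf fU])
    have bnd: "Hs ` ((X - emb ` U) \<times> UNIV) = (X - emb ` U) \<times> UNIV"
    proof
      show "(X - emb ` U) \<times> UNIV \<subseteq> Hs ` ((X - emb ` U) \<times> UNIV)"
      proof
        fix q assume q: "q \<in> (X - emb ` U) \<times> (UNIV::real set)"
        then have g1: "Gs q \<in> (X - emb ` U) \<times> UNIV" using b2 by blast
        have g2: "q = Hs (Gs q)" using inv1 q by auto
        show "q \<in> Hs ` ((X - emb ` U) \<times> UNIV)" by (rule image_eqI[where f=Hs, OF g2 g1])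
      qed
    qed (rule b1)
    have HKs: "H ` (K \<times> UNIV) \<subseteq> K \<times> UNIV" using HK by simp
    have H'Ks: "H' ` (K \<times> UNIV) \<subseteq> K \<times> UNIV" using H'K by simp
    obtain b where btop: "\<forall>c. \<exists>c'. \<forall>x\<in>K. \<forall>t>c'. (if b then snd (H (x, t)) > c else snd (H (x, t)) < c)"
      and bbot: "\<forall>c. \<exists>c'. \<forall>x\<in>K. \<forall>t<c'. (if b then snd (H (x, t)) < c else snd (H (x, t)) > c)"
      using ends[OF Kc Kconn Kne cH cH' HKs H'Ks H'H HH'] by blast
    obtain b' where b'top: "\<forall>c. \<exists>c'. \<forall>x\<in>K. \<forall>t>c'. (if b' then snd (H' (x, t)) > c else snd (H' (x, t)) < c)"
      and b'bot: "\<forall>c. \<exists>c'. \<forall>x\<in>K. \<forall>t<c'. (if b' then snd (H' (x, t)) < c else snd (H' (x, t)) > c)"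
      using ends[OF Kc Kconn Kne cH' cH H'Ks HKs HH' H'H] by blast
    have bb: "b = b'" by (rule sign_consistent[OF x0 HKs H'H btop bbot b'top])
    have apH: "\<And>p t. p \<in> X \<Longrightarrow> \<exists>x\<in>U. \<bar>snd (Hs (p, t)) - snd (H (x, t))\<bar> < 1"
      using approx_snd[OF assms(6) Hc Hf] by blast
    have apG: "\<And>p t. p \<in> X \<Longrightarrow> \<exists>x\<in>U. \<bar>snd (Gs (p, t)) - snd (H' (x, t))\<bar> < 1"
      using approx_snd[OF assms(6) Gc Gg] by blast
    have Htop: "\<forall>c. \<exists>c'. \<forall>p\<in>X. \<forall>t>c'. (if b then snd (Hs (p, t)) > c else snd (Hs (p, t)) < c)"
      using lift_top[where \<phi>s="\<lambda>p t. snd (Hs (p, t))" and \<phi>="\<lambda>x t. snd (H (x, t))", OF apH UK btop] .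
    have Hbot: "\<forall>c. \<exists>c'. \<forall>p\<in>X. \<forall>t<c'. (if b then snd (Hs (p, t)) < c else snd (Hs (p, t)) > c)"
      using lift_bot[where \<phi>s="\<lambda>p t. snd (Hs (p, t))" and \<phi>="\<lambda>x t. snd (H (x, t))", OF apH UK bbot] .
    have Gtop: "\<forall>c. \<exists>c'. \<forall>p\<in>X. \<forall>t>c'. (if b then snd (Gs (p, t)) > c else snd (Gs (p, t)) < c)"
      using lift_top[where \<phi>s="\<lambda>p t. snd (Gs (p, t))" and \<phi>="\<lambda>x t. snd (H' (x, t))", OF apG UK b'top] bb by simp
    have Gbot: "\<forall>c. \<exists>c'. \<forall>p\<in>X. \<forall>t<c'. (if b then snd (Gs (p, t)) < c else snd (Gs (p, t)) > c)"
      using lift_bot[where \<phi>s="\<lambda>p t. snd (Gs (p, t))" and \<phi>="\<lambda>x t. snd (H' (x, t))", OF apG UK b'bot] bb by simp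
    define G where "G = (\<lambda>z. case z of Inl p \<Rightarrow> Inl (Hs p) | Inr s \<Rightarrow> Inr (s = b))"
    define G' where "G' = (\<lambda>z. case z of Inl p \<Rightarrow> Inl (Gs p) | Inr s \<Rightarrow> Inr (s = b))"
    have cG: "continuous_map (two_point_top X dX) (two_point_top X dX) G"
      unfolding G_def by (rule two_point_cont[OF MX Hc Htop Hbot])
    have cG': "continuous_map (two_point_top X dX) (two_point_top X dX) G'"
      unfolding G'_def by (rule two_point_cont[OF MX Gc Gtop Gbot])
    have TT: "topspace (two_point_top X dX) = Inl ` (X \<times> UNIV) \<union> {Inr True, Inr False}"
      by (rule two_point_topspace[OF MX])
    have i1: "G' (G z) = z" if "z \<in> topspace (two_point_top X dX)" for z
      using that inv2 unfolding TT G_def G'_def by (cases z) auto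
    have i2: "G (G' z) = z" if "z \<in> topspace (two_point_top X dX)" for z
      using that inv1 unfolding TT G_def G'_def by (cases z) auto
    have "homeomorphic_map (two_point_top X dX) (two_point_top X dX) G"
      unfolding homeomorphic_map_maps homeomorphic_maps_def using cG cG' i1 i2 by blast
    moreover have "\<forall>p\<in>X \<times> UNIV. G (Inl p) = Inl (Hs p)" unfolding G_def by simp
    ultimately show ?thesis using homeo Hf bnd by blast
  qed
qed


end
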